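(* Let $c_{n,k}$ be the number of matchings of size $n$ with exactly $k$ occurrences of the endhered pattern $321$, and $a_{n,0}$ the number of matchings of size $n$ with no occurrence of the endhered pattern $21$. For any $n>0$, $$c_{n,0}=\sum_{s=0}^{\lfloor n/2\rfloor}\binom{n-s}{s}a_{n-s,0},$$ and for any $k>0$, $$c_{n,k}=\sum_{s=1}^{\lfloor (n-k)/2\rfloor}\binom{k+s-1}{k}\binom{n-k-s}{s}a_{n-k-s,0}.$$
   Context: A matching of size $n$ is a set of $n$ arcs $(a,b)$ with $1\le a<b\le 2n$ such that each point of $\{1,\dots,2n\}$ belongs to exactly one arc (the empty matching has size $0$). An occurrence of the endhered pattern $21$ in a matching is a pair of arcs of the form $(i+1,j+2),(i+2,j+1)$; an occurrence of the endhered pattern $321$ is a triple of arcs of the form $(i+1,j+3),(i+2,j+2),(i+3,j+1)$ (three mutually nested arcs with consecutive starting points and consecutive ending points). The number of occurrences is the number of such pairs (resp. triples). *)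

theory Defs
  imports Main
begin

definition is_matching :: "nat \<Rightarrow> (nat \<times> nat) set \<Rightarrow> bool" where
  "is_matching n M \<longleftrightarrow>
     (\<forall>(a,b)\<in>M. 1 \<le> a \<and> a < b \<and> b \<le> 2*n) \<and>
     (\<forall>p\<in>{1..2*n}. \<exists>!e. e \<in> M \<and> (p = fst e \<or> p = snd e))"

definition matchings :: "nat \<Rightarrow> (nat \<times> nat) set set" where
  "matchings n = {M. is_matching n M}"

definition occ21 :: "(nat \<times> nat) set \<Rightarrow> nat" where
  "occ21 M = card {(i,j). (i+1, j+2) \<in> M \<and> (i+2, j+1) \<in> M}"

definition occ321 :: "(nat \<times> nat) set \<Rightarrow> nat" where
  "occ321 M = card {(i,j). (i+1, j+3) \<in> M \<and> (i+2, j+2) \<in> M \<and> (i+3, j+1) \<in> M}"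

definition c_num :: "nat \<Rightarrow> nat \<Rightarrow> nat" where
  "c_num n k = card {M \<in> matchings n. occ321 M = k}"

definition a_num :: "nat \<Rightarrow> nat \<Rightarrow> nat" where
  "a_num n k = card {M \<in> matchings n. occ21 M = k}"

end

theory Submission
  imports Defs "HOL-Library.Product_Lexorder"
begin
lemma is_matchingD1: "is_matching n M \<Longrightarrow> (x,y) \<in> M \<Longrightarrow> 1 \<le> x \<and> x < y \<and> y \<le> 2*n"
  unfolding is_matching_def by blast

lemma is_matchingD2: "is_matching n M \<Longrightarrow> p \<in> {1..2*n} \<Longrightarrow> \<exists>e\<in>M. p = fst e \<or> p = snd e"
  unfolding is_matching_def by blast

lemma is_matchingD3: "is_matching n M \<Longrightarrow> e1 \<in> M \<Longrightarrow> e2 \<in> M \<Longrightarrow> p = fst e1 \<or> p = snd e1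
   \<Longrightarrow> p = fst e2 \<or> p = snd e2 \<Longrightarrow> e1 = e2"
proof -
  assume m: "is_matching n M" and e: "e1 \<in> M" "e2 \<in> M" "p = fst e1 \<or> p = snd e1" "p = fst e2 \<or> p = snd e2"
  obtain x y where xy: "e1 = (x,y)" by fastforce
  have "p \<in> {1..2*n}" using is_matchingD1[OF m, of x y] e xy by auto
  then have "\<exists>!e. e \<in> M \<and> (p = fst e \<or> p = snd e)" using m unfolding is_matching_def by blast
  then show ?thesis using e by blast
qed

lemma is_matchingI:
  assumes "\<And>x y. (x,y) \<in> M \<Longrightarrow> 1 \<le> x \<and> x < y \<and> y \<le> 2*n"
    and "\<And>p. p \<in> {1..2*n} \<Longrightarrow> \<exists>e\<in>M. p = fst e \<or> p = snd e"
    and "\<And>e1 e2 p. e1 \<in> M \<Longrightarrow> e2 \<in> M \<Longrightarrow> p = fst e1 \<or> p = snd e1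
           \<Longrightarrow> p = fst e2 \<or> p = snd e2 \<Longrightarrow> e1 = e2"
  shows "is_matching n M"
  unfolding is_matching_def using assms by blast

lemma matching_finite: "is_matching n M \<Longrightarrow> finite M"
proof -
  assume m: "is_matching n M"
  have "M \<subseteq> {1..2*n} \<times> {1..2*n}" using is_matchingD1[OF m] by fastforce
  then show ?thesis by (rule finite_subset) auto
qed

lemma uniq_fst: "is_matching n M \<Longrightarrow> (x,y) \<in> M \<Longrightarrow> (x,y') \<in> M \<Longrightarrow> y = y'"
  using is_matchingD3[of n M "(x,y)" "(x,y')" x] by auto
lemma uniq_snd: "is_matching n M \<Longrightarrow> (x,y) \<in> M \<Longrightarrow> (x',y) \<in> M \<Longrightarrow> x = x'"
  using is_matchingD3[of n M "(x,y)" "(x',y)" y] by auto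
lemma uniq_mix: "is_matching n M \<Longrightarrow> (x,y) \<in> M \<Longrightarrow> (y,z) \<in> M \<Longrightarrow> False"
  using is_matchingD3[of n M "(x,y)" "(y,z)" y] is_matchingD1[of n M] by fastforce

definition sg :: "nat \<Rightarrow> nat \<Rightarrow> nat \<Rightarrow> nat" where
  "sg a b x = (if x \<le> a then x else if x < b then Suc x else x + 2)"

definition sgp :: "nat \<Rightarrow> nat \<Rightarrow> nat \<times> nat \<Rightarrow> nat \<times> nat" where
  "sgp a b e = (sg a b (fst e), sg a b (snd e))"

definition dup :: "(nat \<times> nat) set \<Rightarrow> nat \<Rightarrow> nat \<Rightarrow> (nat \<times> nat) set" where
  "dup M a b = sgp a b ` M \<union> {(Suc a, Suc b)}"

lemma sg_inj: "sg a b x = sg a b y \<longleftrightarrow> x = y"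
  unfolding sg_def by auto
lemma sg_less: "sg a b x < sg a b y \<longleftrightarrow> x < y"
  unfolding sg_def by auto
lemma sg_ne1: "sg a b x \<noteq> Suc a" unfolding sg_def by auto
lemma sg_ne2: "a < b \<Longrightarrow> sg a b x \<noteq> Suc b" unfolding sg_def by auto

lemma dup_matching:
  assumes m: "is_matching n M" and ab: "(a,b) \<in> M"
  shows "is_matching (Suc n) (dup M a b)"
proof (rule is_matchingI)
  have ab': "1 \<le> a" "a < b" "b \<le> 2*n" using is_matchingD1[OF m ab] by auto
  fix x y assume "(x,y) \<in> dup M a b"
  then consider "(x,y) = (Suc a, Suc b)" | u v where "(u,v) \<in> M" "x = sg a b u" "y = sg a b v"
    unfolding dup_def sgp_def by auto
  then show "1 \<le> x \<and> x < y \<and> y \<le> 2 * Suc n"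
  proof cases
    case 1 then show ?thesis using ab' by auto
  next
    case 2 then show ?thesis using is_matchingD1[OF m 2(1)] unfolding sg_def by auto
  qed
next
  have ab': "1 \<le> a" "a < b" "b \<le> 2*n" using is_matchingD1[OF m ab] by auto
  fix p assume p: "p \<in> {1..2 * Suc n}"
  show "\<exists>e\<in>dup M a b. p = fst e \<or> p = snd e"
  proof (cases "p = Suc a \<or> p = Suc b")
    case True then show ?thesis unfolding dup_def sgp_def by auto
  next
    case False
    define z where "z = (if p \<le> a then p else if p \<le> b then p - 1 else p - 2)"
    have z: "z \<in> {1..2*n}" "sg a b z = p" using p False ab' unfolding z_def sg_def by auto
    obtain e where e: "e \<in> M" "z = fst e \<or> z = snd e" using is_matchingD2[OF m z(1)] by blast
    show ?thesis
      apply (rule bexI[of _ "(sg a b (fst e), sg a b (snd e))"])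
      using e z unfolding dup_def sgp_def by (auto simp: case_prod_beta)
  qed
next
  have ab': "1 \<le> a" "a < b" "b \<le> 2*n" using is_matchingD1[OF m ab] by auto
  fix e1 e2 p assume e: "e1 \<in> dup M a b" "e2 \<in> dup M a b" "p = fst e1 \<or> p = snd e1" "p = fst e2 \<or> p = snd e2"
  have new: "e = (Suc a, Suc b)" if "e \<in> dup M a b" "fst e = Suc a \<or> snd e = Suc a \<or> fst e = Suc b \<or> snd e = Suc b" for e
    using that sg_ne1[of a b] sg_ne2[OF ab'(2)] unfolding dup_def sgp_def by auto
  show "e1 = e2"
  proof (cases "p = Suc a \<or> p = Suc b")
    case True then show ?thesis using new[OF e(1)] new[OF e(2)] e by auto
  next
    case False
    obtain u1 v1 where 1: "(u1,v1) \<in> M" "e1 = (sg a b u1, sg a b v1)" using e(1) e(3) False unfolding dup_def sgp_def by auto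
    obtain u2 v2 where 2: "(u2,v2) \<in> M" "e2 = (sg a b u2, sg a b v2)" using e(2) e(4) False unfolding dup_def sgp_def by auto
    obtain q where "q = u1 \<or> q = v1" "q = u2 \<or> q = v2"
      using e(3,4) 1 2 sg_inj[of a b] by auto
    then have "(u1,v1) = (u2,v2)" using is_matchingD3[OF m 1(1) 2(1), of q] by auto
    then show ?thesis using 1 2 by simp
  qed
qed

definition Lp :: "(nat \<times> nat) set \<Rightarrow> nat \<Rightarrow> nat \<Rightarrow> nat" where
  "Lp M x y = (LEAST q. (x+q, y-q) \<notin> M)"

lemma Lp_ex: "is_matching n M \<Longrightarrow> \<exists>q. (x+q, y-q) \<notin> M"
  by (rule exI[of _ y]) (use is_matchingD1[of n M "x+y" 0] in auto)

lemma Lp_less: "q < Lp M x y \<Longrightarrow> (x+q, y-q) \<in> M"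
  unfolding Lp_def using not_less_Least by blast

lemma Lp_not: "is_matching n M \<Longrightarrow> (x + Lp M x y, y - Lp M x y) \<notin> M"
  unfolding Lp_def by (rule LeastI_ex) (rule Lp_ex)

lemma Lp_ge_iff: "is_matching n M \<Longrightarrow> k \<le> Lp M x y \<longleftrightarrow> (\<forall>q<k. (x+q, y-q) \<in> M)"
  using Lp_less Lp_not by (metis leI order_less_le_trans)

lemma Lp_eqI: "(\<And>q. q < L \<Longrightarrow> (x+q, y-q) \<in> M) \<Longrightarrow> (x+L, y-L) \<notin> M \<Longrightarrow> Lp M x y = L"
  unfolding Lp_def by (rule Least_equality) (auto simp: not_less[symmetric])

lemma Lp_0: "(x,y) \<notin> M \<Longrightarrow> Lp M x y = 0"
  by (rule Lp_eqI) auto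

lemma Lp_Suc: assumes m: "is_matching n M" and "(x,y) \<in> M"
  shows "Lp M x y = Suc (Lp M (Suc x) (y - 1))"
proof (rule Lp_eqI)
  fix q assume q: "q < Suc (Lp M (Suc x) (y - 1))"
  show "(x + q, y - q) \<in> M"
  proof (cases q)
    case 0 then show ?thesis using assms by simp
  next
    case (Suc q')
    have "(Suc x + q', y - 1 - q') \<in> M" using Lp_less[of q' M "Suc x" "y - 1"] q Suc by simp
    moreover have "Suc x + q' = x + q" "y - 1 - q' = y - q" by (simp_all add: Suc)
    ultimately show ?thesis by (simp only:)
  qed
next
  show "(x + Suc (Lp M (Suc x) (y - 1)), y - Suc (Lp M (Suc x) (y - 1))) \<notin> M"
  proof -
    have "x + Suc (Lp M (Suc x) (y - 1)) = Suc x + Lp M (Suc x) (y - 1)" by simp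
    moreover have "y - Suc (Lp M (Suc x) (y - 1)) = y - 1 - Lp M (Suc x) (y - 1)" by simp
    ultimately show ?thesis using Lp_not[OF m, of "Suc x" "y - 1"] by (simp only: not_False_eq_True)
  qed
qed

lemma Lp_pos: "is_matching n M \<Longrightarrow> (x,y) \<in> M \<Longrightarrow> Lp M x y \<ge> 1"
  by (subst Lp_Suc) auto

lemma sg_Suc_eq: "sg a b u = Suc (sg a b z) \<Longrightarrow> u = Suc z"
  unfolding sg_def by (auto split: if_splits)
lemma sg_pred_eq: "sg a b v = sg a b z - 1 \<Longrightarrow> z \<ge> 1 \<Longrightarrow> v = z - 1"
  unfolding sg_def by (auto split: if_splits)
lemma sg_eq_a: "sg a b z = a \<Longrightarrow> z = a"
  unfolding sg_def by (auto split: if_splits)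
lemma sg_eq_b2: "a < b \<Longrightarrow> sg a b z = b + 2 \<Longrightarrow> z = b"
  unfolding sg_def by (auto split: if_splits)

lemma shift_ok:
  assumes m: "is_matching n M" and ab: "(a,b) \<in> M"
    and ch: "\<And>q'. q' \<le> q \<Longrightarrow> (x+q', y-q') \<in> M \<and> (x+q', y-q') \<noteq> (a,b)"
  shows "sg a b (x+q) = sg a b x + q \<and> sg a b (y-q) = sg a b y - q"
proof -
  have ab': "1 \<le> a" "a < b" using is_matchingD1[OF m ab] by auto
  have xy: "x + q < y - q" using is_matchingD1[OF m, of "x+q" "y-q"] ch[of q] by auto
  have c1: "\<not> (x \<le> a \<and> a < x+q)"
  proof
    assume h: "x \<le> a \<and> a < x+q"
    define q' where "q' = a - x"
    have qq: "q' \<le> q" "x + q' = a" using h by (auto simp: q'_def)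
    have 1: "(x+q', y - q') \<in> M" "(x+q', y-q') \<noteq> (a,b)" using ch[OF qq(1)] by auto
    have "y - q' = b" using uniq_fst[OF m 1(1)[unfolded qq(2)] ab] .
    then show False using 1(2) qq(2) by auto
  qed
  have c2: "\<not> (x < b \<and> b \<le> x+q)"
  proof
    assume h: "x < b \<and> b \<le> x+q"
    define q' where "q' = b - x"
    have qq: "q' \<le> q" "x + q' = b" using h by (auto simp: q'_def)
    have "(x + q', y - q') \<in> M" using ch[OF qq(1)] by auto
    then show False using uniq_mix[OF m ab] qq(2) by blast
  qed
  have c3: "\<not> (y - q \<le> a \<and> a < y)"
  proof
    assume h: "y - q \<le> a \<and> a < y"
    define q' where "q' = y - a"
    have qq: "q' \<le> q" "y - q' = a" using h by (auto simp: q'_def)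
    have "(x + q', y - q') \<in> M" using ch[OF qq(1)] by auto
    then show False using uniq_mix[OF m _ ab] qq(2) by blast
  qed
  have c4: "\<not> (y - q < b \<and> b \<le> y)"
  proof
    assume h: "y - q < b \<and> b \<le> y"
    define q' where "q' = y - b"
    have qq: "q' \<le> q" "y - q' = b" using h by (auto simp: q'_def)
    have 1: "(x+q', y - q') \<in> M" "(x+q', y-q') \<noteq> (a,b)" using ch[OF qq(1)] by auto
    have "x + q' = a" using uniq_snd[OF m 1(1)[unfolded qq(2)] ab] .
    then show False using 1(2) qq(2) by auto
  qed
  have "sg a b (x+q) = sg a b x + q" using c1 c2 unfolding sg_def by auto
  moreover have "sg a b (y-q) = sg a b y - q" using c3 c4 xy unfolding sg_def by auto
  ultimately show ?thesis by blast
qed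

lemma Ltrans:
  assumes m: "is_matching n M" and ab: "(a,b) \<in> M"
    and nc: "\<And>q. q < Lp M x y \<Longrightarrow> (x+q, y-q) \<noteq> (a,b)"
  shows "Lp (dup M a b) (sg a b x) (sg a b y) = Lp M x y"
proof -
  have ab': "1 \<le> a" "a < b" using is_matchingD1[OF m ab] by auto
  define L where "L = Lp M x y"
  have chL: "(x+q', y-q') \<in> M \<and> (x+q', y-q') \<noteq> (a,b)" if "q' < L" for q'
  proof -
    have "q' < Lp M x y" using that L_def by simp
    then show ?thesis using Lp_less[of q' M x y] nc[of q'] by blast
  qed
  have notM: "(x+L, y-L) \<notin> M" using Lp_not[OF m] unfolding L_def by blast
  have "Lp (dup M a b) (sg a b x) (sg a b y) = L"
  proof (rule Lp_eqI)
    fix q assume q: "q < L"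
    have ch: "(x+q', y-q') \<in> M \<and> (x+q', y-q') \<noteq> (a,b)" if "q' \<le> q" for q'
      using chL[of q'] that q by simp
    have 1: "sg a b (x+q) = sg a b x + q \<and> sg a b (y-q) = sg a b y - q"
      by (rule shift_ok[OF m ab ch])
    have 2: "(x+q,y-q) \<in> M" using chL q by blast
    have "sgp a b (x+q,y-q) \<in> dup M a b" using 2 unfolding dup_def by blast
    then show "(sg a b x + q, sg a b y - q) \<in> dup M a b" using 1 unfolding sgp_def by simp
  next
    show "(sg a b x + L, sg a b y - L) \<notin> dup M a b"
    proof (cases L)
      case 0
      then show ?thesis
        using notM sg_ne1[of a b x] sg_inj[of a b] unfolding dup_def sgp_def by auto
    next
      case (Suc L')
      have ch: "(x+q', y-q') \<in> M \<and> (x+q', y-q') \<noteq> (a,b)" if "q' \<le> L'" for q'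
        using chL[of q'] that Suc by simp
      have sh: "sg a b (x+L') = sg a b x + L' \<and> sg a b (y-L') = sg a b y - L'"
        by (rule shift_ok[OF m ab ch])
      have inM: "(x+L', y-L') \<in> M" "(x+L', y-L') \<noteq> (a,b)" using ch[of L'] by auto
      have yl: "x + L' < y - L'" using is_matchingD1[OF m inM(1)] by auto
      show "(sg a b x + L, sg a b y - L) \<notin> dup M a b"
      proof
        assume "(sg a b x + L, sg a b y - L) \<in> dup M a b"
        then consider "(sg a b x + L, sg a b y - L) = (Suc a, Suc b)"
          | u v where "(u,v) \<in> M" "sg a b u = sg a b x + L" "sg a b v = sg a b y - L"
          unfolding dup_def sgp_def by auto
        then show False
        proof cases
          case 1
          then have "sg a b (x+L') = a" "sg a b (y-L') = b+2" using sh Suc by auto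
          then have "x + L' = a" "y - L' = b" using sg_eq_a sg_eq_b2[OF ab'(2)] by auto
          then show False using inM by auto
        next
          case 2
          have e1: "sg a b u = Suc (sg a b (x+L'))" using 2(2) sh Suc by simp
          have e2: "sg a b v = sg a b (y-L') - 1" using 2(3) sh Suc by simp
          have "u = Suc (x+L')" using sg_Suc_eq[OF e1] .
          moreover have "v = (y - L') - 1" using sg_pred_eq[OF e2] yl by simp
          moreover have "x + L = Suc (x + L')" "y - L = y - L' - 1" using Suc by simp_all
          ultimately show False using 2(1) notM by simp
        qed
      qed
    qed
  qed
  then show ?thesis unfolding L_def .
qed

lemma dup_in1: "(x,y) \<in> M \<Longrightarrow> (sg a b x, sg a b y) \<in> dup M a b"
  unfolding dup_def sgp_def by force
lemma dup_in2: "(Suc a, Suc b) \<in> dup M a b"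
  unfolding dup_def by blast
lemma sg_a: "sg a b a = a" unfolding sg_def by simp
lemma sg_b: "a < b \<Longrightarrow> sg a b b = b + 2" unfolding sg_def by simp

lemma L2:
  assumes m: "is_matching n M" and ab: "(a,b) \<in> M"
  shows "Lp (dup M a b) (Suc a) (Suc b) = Lp M a b"
    and "Lp (dup M a b) a (b+2) = Suc (Lp M a b)"
proof -
  have ab': "1 \<le> a" "a < b" using is_matchingD1[OF m ab] by auto
  have m': "is_matching (Suc n) (dup M a b)" using dup_matching[OF m ab] .
  have i1: "(a, b+2) \<in> dup M a b" using dup_in1[OF ab, of a b] sg_a sg_b[OF ab'(2)] by simp
  have "Lp (dup M a b) (Suc a) (Suc b) = Suc (Lp (dup M a b) (Suc (Suc a)) b)"
    using Lp_Suc[OF m' dup_in2] by simp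
  moreover have "Lp M a b = Suc (Lp M (Suc a) (b - 1))" using Lp_Suc[OF m ab] .
  moreover have "Lp (dup M a b) (Suc (Suc a)) b = Lp M (Suc a) (b - 1)"
  proof (cases "Suc a < b")
    case True
    have "sg a b (Suc a) = Suc (Suc a)" "sg a b (b - 1) = b" using True unfolding sg_def by auto
    moreover have "Lp (dup M a b) (sg a b (Suc a)) (sg a b (b-1)) = Lp M (Suc a) (b - 1)"
      by (rule Ltrans[OF m ab]) auto
    ultimately show ?thesis by simp
  next
    case False
    then have b: "b = Suc a" using ab' by simp
    have "(Suc a, b - 1) \<notin> M" using is_matchingD1[OF m, of "Suc a" "b - 1"] b by auto
    moreover have "(Suc (Suc a), b) \<notin> dup M a b" using is_matchingD1[OF m', of "Suc (Suc a)" b] b by auto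
    ultimately show ?thesis using Lp_0 by metis
  qed
  ultimately show "Lp (dup M a b) (Suc a) (Suc b) = Lp M a b" by simp
  moreover have "Lp (dup M a b) a (b+2) = Suc (Lp (dup M a b) (Suc a) (Suc b))"
    using Lp_Suc[OF m' i1] by simp
  ultimately show "Lp (dup M a b) a (b+2) = Suc (Lp M a b)" by simp
qed

definition starts :: "(nat \<times> nat) set \<Rightarrow> (nat \<times> nat) set" where
  "starts M = {e \<in> M. (fst e - 1, Suc (snd e)) \<notin> M}"

lemma sg_eq_a2: "sg a b z = Suc (Suc a) \<Longrightarrow> a < b \<Longrightarrow> z = Suc a"
  unfolding sg_def by (auto split: if_splits)
lemma sg_eq_b: "sg a b z = b \<Longrightarrow> a < b \<Longrightarrow> z = b - 1"
  unfolding sg_def by (auto split: if_splits)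

lemma starts_dup:
  assumes m: "is_matching n M" and ab: "(a,b) \<in> M"
  shows "starts (dup M a b) = sgp a b ` starts M"
proof
  have ab': "1 \<le> a" "a < b" using is_matchingD1[OF m ab] by auto
  show "sgp a b ` starts M \<subseteq> starts (dup M a b)"
  proof
    fix e' assume "e' \<in> sgp a b ` starts M"
    then obtain x y where xy: "(x,y) \<in> M" "(x - 1, Suc y) \<notin> M" "e' = (sg a b x, sg a b y)"
      unfolding starts_def sgp_def by auto
    have x1: "1 \<le> x" using is_matchingD1[OF m xy(1)] by auto
    have "(sg a b x - 1, Suc (sg a b y)) \<notin> dup M a b"
    proof
      assume "(sg a b x - 1, Suc (sg a b y)) \<in> dup M a b"
      then consider "(sg a b x - 1, Suc (sg a b y)) = (Suc a, Suc b)"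
        | u v where "(u,v) \<in> M" "sg a b u = sg a b x - 1" "sg a b v = Suc (sg a b y)"
        unfolding dup_def sgp_def by auto
      then show False
      proof cases
        case 1
        then have "sg a b x = Suc (Suc a)" "sg a b y = b" using x1 unfolding sg_def by (auto split: if_splits)
        then have "x = Suc a" "y = b - 1" using sg_eq_a2 sg_eq_b ab' by auto
        then show False using xy(2) ab ab' by simp
      next
        case 2
        have "u = x - 1" using sg_pred_eq[OF 2(2) x1] .
        moreover have "v = Suc y" using sg_Suc_eq[OF 2(3)] .
        ultimately show False using 2(1) xy(2) by simp
      qed
    qed
    then show "e' \<in> starts (dup M a b)" using xy dup_in1[OF xy(1)] unfolding starts_def by auto
  qed
next
  have ab': "1 \<le> a" "a < b" using is_matchingD1[OF m ab] by auto
  show "starts (dup M a b) \<subseteq> sgp a b ` starts M"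
  proof
    fix e' assume e': "e' \<in> starts (dup M a b)"
    then have "e' \<in> dup M a b" unfolding starts_def by auto
    then consider "e' = (Suc a, Suc b)" | x y where "(x,y) \<in> M" "e' = (sg a b x, sg a b y)"
      unfolding dup_def sgp_def by auto
    then show "e' \<in> sgp a b ` starts M"
    proof cases
      case 1
      have "(a, b+2) \<in> dup M a b" using dup_in1[OF ab, of a b] sg_a sg_b[OF ab'(2)] by simp
      then show ?thesis using e' 1 unfolding starts_def by simp
    next
      case 2
      have x1: "1 \<le> x" "x < y" using is_matchingD1[OF m 2(1)] by auto
      have "(x - 1, Suc y) \<notin> M"
      proof
        assume h: "(x - 1, Suc y) \<in> M"
        show False
        proof (cases "(x - 1, Suc y) = (a,b)")
          case True
          then have xy: "x = Suc a" "y = b - 1" using x1 by auto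
          then have "Suc a < b - 1" using x1 by simp
          then have "sg a b x = Suc (Suc a)" "sg a b y = b" using xy unfolding sg_def by auto
          then have "(sg a b x - 1, Suc (sg a b y)) \<in> dup M a b" using dup_in2 by simp
          then show False using e' 2(2) unfolding starts_def by auto
        next
          case False
          have n1: "x - 1 \<noteq> a"
          proof
            assume "x - 1 = a"
            then have "Suc y = b" using uniq_fst[OF m h] ab by auto
            then show False using False \<open>x - 1 = a\<close> by simp
          qed
          have n2: "x \<noteq> b" using uniq_mix[OF m ab] 2(1) by auto
          have n3: "y \<noteq> a" using uniq_mix[OF m 2(1)] ab by auto
          have n4: "Suc y \<noteq> b"
          proof
            assume "Suc y = b"
            then have "x - 1 = a" using uniq_snd[OF m h] ab by auto
            then show False using False \<open>Suc y = b\<close> by simp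
          qed
          have "sg a b (x - 1) = sg a b x - 1" "sg a b (Suc y) = Suc (sg a b y)"
            using n1 n2 n3 n4 x1 unfolding sg_def by auto
          then have "(sg a b x - 1, Suc (sg a b y)) \<in> dup M a b" using dup_in1[OF h, of a b] by simp
          then show False using e' 2(2) unfolding starts_def by auto
        qed
      qed
      then have "(x,y) \<in> starts M" using 2(1) unfolding starts_def by simp
      then show ?thesis using 2(2) unfolding sgp_def by force
    qed
  qed
qed

lemma Lp_keep:
  assumes m: "is_matching n M" and ab: "(a,b) \<in> starts M" and e: "e \<in> M" "e \<noteq> (a,b)"
  shows "Lp (dup M a b) (sg a b (fst e)) (sg a b (snd e)) = Lp M (fst e) (snd e)"
proof (rule Ltrans[OF m])
  show "(a,b) \<in> M" using ab unfolding starts_def by simp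
  fix q assume q: "q < Lp M (fst e) (snd e)"
  show "(fst e + q, snd e - q) \<noteq> (a, b)"
  proof
    assume h: "(fst e + q, snd e - q) = (a, b)"
    show False
    proof (cases q)
      case 0 then show False using h e by (cases e) auto
    next
      case (Suc q')
      have "(fst e + q', snd e - q') \<in> M" using Lp_less[of q' M "fst e" "snd e"] q Suc by simp
      moreover have "fst e + q' = a - 1" "snd e - q' = Suc b"
        using h Suc is_matchingD1[OF m, of "fst e + q'" "snd e - q'"] calculation by auto
      ultimately show False using ab unfolding starts_def by simp
    qed
  qed
qed

lemma sorted_list_of_set_mono_image:
  fixes f :: "'a::linorder \<Rightarrow> 'b::linorder"
  assumes fin: "finite S" and mono: "\<And>x y. x \<in> S \<Longrightarrow> y \<in> S \<Longrightarrow> x < y \<Longrightarrow> f x < f y"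
  shows "sorted_list_of_set (f ` S) = map f (sorted_list_of_set S)"
proof -
  have inj: "inj_on f S"
  proof (rule inj_onI)
    fix x y assume "x \<in> S" "y \<in> S" "f x = f y"
    then show "x = y" using mono[of x y] mono[of y x] by (metis less_irrefl linorder_neqE)
  qed
  let ?l = "sorted_list_of_set S"
  have s: "sorted_wrt (<) ?l" using strict_sorted_list_of_set by blast
  have "sorted_wrt (<) (map f ?l)"
    unfolding sorted_wrt_map using s
    by (rule sorted_wrt_mono_rel[rotated]) (use fin mono in auto)
  moreover have "set (map f ?l) = f ` S" using fin by simp
  moreover have "length (map f ?l) = card (f ` S)" using fin inj by (simp add: card_image)
  ultimately show ?thesis
    using sorted_list_of_set_unique[of "f ` S" "map f ?l"] fin by simp
qed

lemma starts_sub: "starts M \<subseteq> M" unfolding starts_def by auto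

lemma sgp_mono: "a < b \<Longrightarrow> x < y \<Longrightarrow> sgp a b x < sgp a b y"
  unfolding sgp_def less_prod_def' by (simp add: sg_less sg_inj)

definition sl :: "(nat \<times> nat) set \<Rightarrow> (nat \<times> nat) list" where
  "sl M = sorted_list_of_set (starts M)"

definition bseq :: "(nat \<times> nat) set \<Rightarrow> nat list" where
  "bseq M = map (\<lambda>e. Lp M (fst e) (snd e)) (sl M)"

lemma sl_dup:
  assumes m: "is_matching n M" and ab: "(a,b) \<in> M"
  shows "sl (dup M a b) = map (sgp a b) (sl M)"
proof -
  have ab': "a < b" using is_matchingD1[OF m ab] by auto
  have fin: "finite (starts M)" using matching_finite[OF m] starts_sub finite_subset by blast
  show ?thesis unfolding sl_def starts_dup[OF m ab]
    by (rule sorted_list_of_set_mono_image[OF fin]) (use sgp_mono ab' in auto)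
qed

lemma set_sl: "is_matching n M \<Longrightarrow> set (sl M) = starts M"
  unfolding sl_def using matching_finite starts_sub finite_subset set_sorted_list_of_set by metis

lemma distinct_sl: "distinct (sl M)"
  unfolding sl_def by simp

lemma bseq_dup:
  assumes m: "is_matching n M" and i: "i < length (sl M)" and ab: "sl M ! i = (a,b)"
  shows "bseq (dup M a b) = (bseq M)[i := Suc (bseq M ! i)]"
proof -
  have abs: "(a,b) \<in> starts M" using set_sl[OF m] i ab nth_mem by metis
  then have abM: "(a,b) \<in> M" using starts_sub by blast
  have len: "length (bseq (dup M a b)) = length ((bseq M)[i := Suc (bseq M ! i)])"
    unfolding bseq_def sl_dup[OF m abM] by simp
  show ?thesis
  proof (rule nth_equalityI[OF len])
    fix j assume j: "j < length (bseq (dup M a b))"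
    then have j': "j < length (sl M)" unfolding bseq_def sl_dup[OF m abM] by simp
    have lhs: "bseq (dup M a b) ! j = Lp (dup M a b) (sg a b (fst (sl M ! j))) (sg a b (snd (sl M ! j)))"
      unfolding bseq_def sl_dup[OF m abM] using j' by (simp add: sgp_def)
    have ej: "sl M ! j \<in> M" using set_sl[OF m] j' nth_mem starts_sub by blast
    show "bseq (dup M a b) ! j = (bseq M)[i := Suc (bseq M ! i)] ! j"
    proof (cases "j = i")
      case True
      have "bseq M ! i = Lp M a b" unfolding bseq_def using i ab by simp
      moreover have "sg a b a = a" "sg a b b = b + 2" using sg_a sg_b abM is_matchingD1[OF m abM] by auto
      ultimately show ?thesis using lhs True ab L2(2)[OF m abM] i unfolding bseq_def by simp
    next
      case False
      then have "sl M ! j \<noteq> (a,b)" using ab distinct_sl i j' nth_eq_iff_index_eq by metis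
      then have "Lp (dup M a b) (sg a b (fst (sl M ! j))) (sg a b (snd (sl M ! j))) = Lp M (fst (sl M ! j)) (snd (sl M ! j))"
        using Lp_keep[OF m abs ej] by blast
      then show ?thesis using lhs False j' unfolding bseq_def by simp
    qed
  qed
qed

definition tau :: "nat \<Rightarrow> nat \<Rightarrow> nat \<Rightarrow> nat" where
  "tau a c x = (if x \<le> a then x else if x < c + 2 then x - 1 else x - 2)"

lemma sg_tau: "a < c \<Longrightarrow> p \<noteq> Suc a \<Longrightarrow> p \<noteq> Suc c \<Longrightarrow> sg a c (tau a c p) = p"
  unfolding sg_def tau_def by auto
lemma tau_sg: "a < c \<Longrightarrow> tau a c (sg a c p) = p"
  unfolding sg_def tau_def by auto

lemma undup:
  assumes m: "is_matching (Suc n) M" and ab: "(a, c+2) \<in> M" and inner: "(Suc a, Suc c) \<in> M"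
  shows "\<exists>M0. is_matching n M0 \<and> (a, c) \<in> M0 \<and> M = dup M0 a c"
proof -
  have ac: "a < c" using is_matchingD1[OF m inner] by simp
  have c2: "c + 2 \<le> 2 * Suc n" "1 \<le> a" using is_matchingD1[OF m ab] by auto
  define M' where "M' = M - {(Suc a, Suc c)}"
  define tt where "tt = (\<lambda>e. (tau a c (fst e), tau a c (snd e)))"
  define M0 where "M0 = tt ` M'"
  have avoid: "p \<noteq> Suc a \<and> p \<noteq> Suc c" if "e \<in> M'" "p = fst e \<or> p = snd e" for e p
  proof -
    have "e \<in> M" "e \<noteq> (Suc a, Suc c)" using that unfolding M'_def by auto
    then show ?thesis using is_matchingD3[OF m _ inner, of e p] that(2) by auto
  qed
  have bck: "sgp a c (tt e) = e" if "e \<in> M'" for e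
    using avoid[OF that, of "fst e"] avoid[OF that, of "snd e"] sg_tau[OF ac]
    unfolding sgp_def tt_def by (cases e) auto
  have "dup M0 a c = sgp a c ` tt ` M' \<union> {(Suc a, Suc c)}" unfolding dup_def M0_def by simp
  also have "sgp a c ` tt ` M' = M'"
  proof -
    have "sgp a c ` tt ` M' = (\<lambda>e. sgp a c (tt e)) ` M'" by (simp add: image_image)
    also have "\<dots> = M'" using bck by simp
    finally show ?thesis .
  qed
  finally have dupeq: "dup M0 a c = M" unfolding M'_def using inner by auto
  have acM0: "(a, c) \<in> M0"
  proof -
    have "(a, c+2) \<in> M'" using ab unfolding M'_def by auto
    moreover have "tt (a, c+2) = (a, c)" unfolding tt_def tau_def using ac by simp
    ultimately show ?thesis unfolding M0_def by force
  qed
  have mono_tau: "tau a c x < tau a c y" if "x < y" "e1 \<in> M'" "x = fst e1 \<or> x = snd e1"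
     "e2 \<in> M'" "y = fst e2 \<or> y = snd e2" for x y e1 e2
  proof (rule ccontr)
    assume "\<not> tau a c x < tau a c y"
    then have "sg a c (tau a c y) \<le> sg a c (tau a c x)" using sg_less by (metis not_less)
    then have "y \<le> x" using sg_tau[OF ac] avoid that by metis
    then show False using that by simp
  qed
  have mat: "is_matching n M0"
  proof (rule is_matchingI)
    fix x y assume "(x,y) \<in> M0"
    then obtain u v where uv: "(u,v) \<in> M'" "x = tau a c u" "y = tau a c v"
      unfolding M0_def tt_def by auto
    have uvM: "1 \<le> u" "u < v" "v \<le> 2 * Suc n" using is_matchingD1[OF m, of u v] uv(1) unfolding M'_def by auto
    have av: "v \<noteq> Suc a" "v \<noteq> Suc c" "u \<noteq> Suc a" using avoid[OF uv(1)] by auto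
    have "x < y" using mono_tau[OF uvM(2) uv(1) _ uv(1)] uv by simp
    moreover have "1 \<le> x" using uvM c2 uv(2) ac unfolding tau_def by auto
    moreover have "y \<le> 2 * n" using uvM c2 uv(3) av ac unfolding tau_def by auto
    ultimately show "1 \<le> x \<and> x < y \<and> y \<le> 2 * n" by simp
  next
    fix p assume p: "p \<in> {1..2*n}"
    define z where "z = sg a c p"
    have z: "z \<in> {1..2 * Suc n}" using p c2 ac unfolding z_def sg_def by auto
    obtain e where e: "e \<in> M" "z = fst e \<or> z = snd e" using is_matchingD2[OF m z] by blast
    have "e \<noteq> (Suc a, Suc c)" using e(2) sg_ne1[of a c p] sg_ne2[OF ac, of p] unfolding z_def by auto
    then have "e \<in> M'" unfolding M'_def using e by auto
    moreover have "p = tau a c z" unfolding z_def using tau_sg[OF ac] by simp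
    ultimately show "\<exists>e\<in>M0. p = fst e \<or> p = snd e"
      unfolding M0_def tt_def using e(2) by force
  next
    fix e1 e2 p assume h: "e1 \<in> M0" "e2 \<in> M0" "p = fst e1 \<or> p = snd e1" "p = fst e2 \<or> p = snd e2"
    obtain f1 where f1: "f1 \<in> M'" "e1 = tt f1" using h(1) unfolding M0_def by auto
    obtain f2 where f2: "f2 \<in> M'" "e2 = tt f2" using h(2) unfolding M0_def by auto
    have "sg a c p = fst f1 \<or> sg a c p = snd f1"
      using h(3) f1 bck[OF f1(1)] unfolding sgp_def by (metis fst_conv snd_conv)
    moreover have "sg a c p = fst f2 \<or> sg a c p = snd f2"
      using h(4) f2 bck[OF f2(1)] unfolding sgp_def by (metis fst_conv snd_conv)
    ultimately have "f1 = f2" using is_matchingD3[OF m, of f1 f2] f1 f2 unfolding M'_def by auto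
    then show "e1 = e2" using f1 f2 by simp
  qed
  show ?thesis using mat acM0 dupeq by blast
qed

lemma matching_card: assumes m: "is_matching n M" shows "card M = n"
proof -
  have fin: "finite M" using matching_finite[OF m] .
  have U: "{1..2*n} = (\<Union>e\<in>M. {fst e, snd e})"
  proof
    show "{1..2*n} \<subseteq> (\<Union>e\<in>M. {fst e, snd e})"
    proof
      fix p assume "p \<in> {1..2*n}"
      then obtain e where "e \<in> M" "p = fst e \<or> p = snd e" using is_matchingD2[OF m] by blast
      then show "p \<in> (\<Union>e\<in>M. {fst e, snd e})" by blast
    qed
    show "(\<Union>e\<in>M. {fst e, snd e}) \<subseteq> {1..2*n}"
    proof
      fix p assume "p \<in> (\<Union>e\<in>M. {fst e, snd e})"
      then obtain e where e: "e \<in> M" "p = fst e \<or> p = snd e" by blast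
      have "1 \<le> fst e \<and> fst e < snd e \<and> snd e \<le> 2*n" using is_matchingD1[OF m, of "fst e" "snd e"] e(1) by simp
      then show "p \<in> {1..2*n}" using e(2) by auto
    qed
  qed
  have disj: "\<forall>i\<in>M. \<forall>j\<in>M. i \<noteq> j \<longrightarrow> {fst i, snd i} \<inter> {fst j, snd j} = {}"
  proof (intro ballI impI)
    fix i j assume ij: "i \<in> M" "j \<in> M" "i \<noteq> j"
    show "{fst i, snd i} \<inter> {fst j, snd j} = {}"
    proof (rule ccontr)
      assume "{fst i, snd i} \<inter> {fst j, snd j} \<noteq> {}"
      then obtain p where "p = fst i \<or> p = snd i" "p = fst j \<or> p = snd j" by blast
      then show False using is_matchingD3[OF m ij(1,2)] ij(3) by blast
    qed
  qed
  have "card (\<Union>e\<in>M. {fst e, snd e}) = (\<Sum>e\<in>M. card {fst e, snd e})"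
    by (rule card_UN_disjoint[OF fin _ disj]) simp
  also have "\<dots> = (\<Sum>e\<in>M. 2)"
  proof (rule sum.cong)
    fix e assume "e \<in> M"
    then have "fst e \<noteq> snd e" using is_matchingD1[OF m, of "fst e" "snd e"] by auto
    then show "card {fst e, snd e} = 2" by simp
  qed simp
  finally have "card (\<Union>e\<in>M. {fst e, snd e}) = 2 * card M" by simp
  moreover have "card {1..2*n} = 2 * n" by simp
  ultimately have "2 * n = 2 * card M" by (metis U)
  then show ?thesis by simp
qed

lemma matchings0: "is_matching 0 M \<Longrightarrow> M = {}"
  using is_matchingD1[of 0 M] by fastforce

lemma bseq_empty: "bseq {} = []"
  unfolding bseq_def sl_def starts_def by simp

lemma length_bseq: "length (bseq M) = length (sl M)"
  unfolding bseq_def by simp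

lemma bseq_nth: "i < length (sl M) \<Longrightarrow> bseq M ! i = Lp M (fst (sl M ! i)) (snd (sl M ! i))"
  unfolding bseq_def by simp

lemma ancestor:
  assumes m: "is_matching n M"
  shows "(x,y) \<in> M \<Longrightarrow> \<exists>s\<in>starts M. Lp M (fst s) (snd s) \<ge> Lp M x y"
proof (induction x arbitrary: y rule: less_induct)
  case (less x)
  show ?case
  proof (cases "(x,y) \<in> starts M")
    case True then show ?thesis by force
  next
    case False
    then have h: "(x - 1, Suc y) \<in> M" using less.prems unfolding starts_def by auto
    have x1: "1 \<le> x" using is_matchingD1[OF m less.prems] by auto
    have "Lp M (x - 1) (Suc y) = Suc (Lp M (Suc (x - 1)) (Suc y - 1))" using Lp_Suc[OF m h] .
    also have "Suc (x - 1) = x" using x1 by simp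
    finally have eq: "Lp M (x - 1) (Suc y) = Suc (Lp M x y)" by simp
    obtain s where "s \<in> starts M" "Lp M (fst s) (snd s) \<ge> Lp M (x - 1) (Suc y)"
      using less.IH[of "x - 1" "Suc y"] h x1 by auto
    then show ?thesis using eq by force
  qed
qed

definition cnt :: "nat \<Rightarrow> (nat \<times> nat) set \<Rightarrow> nat" where
  "cnt k M = card {e \<in> M. k \<le> Lp M (fst e) (snd e)}"

lemma all_le1_bseq:
  assumes m: "is_matching n M" and le: "\<And>e. e \<in> M \<Longrightarrow> Lp M (fst e) (snd e) \<le> 1"
  shows "bseq M = replicate n 1"
proof -
  have st: "starts M = M"
  proof
    show "starts M \<subseteq> M" by (rule starts_sub)
    show "M \<subseteq> starts M"
    proof
      fix e assume e: "e \<in> M"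
      obtain x y where xy: "e = (x,y)" by fastforce
      have x1: "1 \<le> x" using is_matchingD1[OF m, of x y] e xy by auto
      have "(x - 1, Suc y) \<notin> M"
      proof
        assume h: "(x - 1, Suc y) \<in> M"
        have "Lp M (x - 1) (Suc y) = Suc (Lp M (Suc (x - 1)) (Suc y - 1))" using Lp_Suc[OF m h] .
        also have "Suc (x - 1) = x" using x1 by simp
        finally have "Lp M (x - 1) (Suc y) = Suc (Lp M x y)" by simp
        moreover have "Lp M x y \<ge> 1" using Lp_pos[OF m, of x y] e xy by simp
        ultimately show False using le[OF h] by simp
      qed
      then show "e \<in> starts M" using e xy unfolding starts_def by simp
    qed
  qed
  have len: "length (sl M) = n" unfolding sl_def st using matching_card[OF m] by simp
  have all1: "\<forall>e\<in>set (sl M). Lp M (fst e) (snd e) = 1"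
  proof
    fix e assume "e \<in> set (sl M)"
    then have "e \<in> M" using set_sl[OF m] starts_sub by blast
    then have "(fst e, snd e) \<in> M" by simp
    then show "Lp M (fst e) (snd e) = 1" using le[OF \<open>e \<in> M\<close>] Lp_pos[OF m, of "fst e" "snd e"] by simp
  qed
  have "bseq M = map (\<lambda>_. 1) (sl M)" using all1 unfolding bseq_def by simp
  also have "\<dots> = replicate (length (sl M)) 1" by (rule map_replicate_const)
  finally show ?thesis using len by simp
qed

lemma base_char:
  assumes m: "is_matching n M"
  shows "bseq M = replicate k 1 \<longleftrightarrow> k = n \<and> cnt 2 M = 0"
proof
  assume h: "bseq M = replicate k 1"
  have le: "Lp M (fst e) (snd e) \<le> 1" if ee: "e \<in> M" for e
  proof -
    obtain s where s: "s \<in> starts M" "Lp M (fst s) (snd s) \<ge> Lp M (fst e) (snd e)"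
      using ancestor[OF m, of "fst e" "snd e"] ee by (metis prod.collapse)
    obtain j where j: "j < length (sl M)" "sl M ! j = s" using s(1) set_sl[OF m] by (metis in_set_conv_nth)
    have "bseq M ! j = Lp M (fst s) (snd s)" using bseq_nth[OF j(1)] j(2) by simp
    moreover have "bseq M ! j = 1" using h j(1) length_bseq[of M] by simp
    ultimately show ?thesis using s(2) by simp
  qed
  have "bseq M = replicate n 1" by (rule all_le1_bseq[OF m le])
  then have "k = n" using h by (metis length_replicate)
  moreover have "{e \<in> M. 2 \<le> Lp M (fst e) (snd e)} = {}" using le by fastforce
  then have "cnt 2 M = 0" unfolding cnt_def by (metis card.empty)
  ultimately show "k = n \<and> cnt 2 M = 0" by simp
next
  assume h: "k = n \<and> cnt 2 M = 0"
  have fin: "finite {e \<in> M. 2 \<le> Lp M (fst e) (snd e)}" using matching_finite[OF m] by simp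
  have "{e \<in> M. 2 \<le> Lp M (fst e) (snd e)} = {}" using h fin unfolding cnt_def by simp
  then have le: "Lp M (fst e) (snd e) \<le> 1" if "e \<in> M" for e using that by fastforce
  show "bseq M = replicate k 1" using all_le1_bseq[OF m le] h by simp
qed

definition AA :: "nat \<Rightarrow> nat list \<Rightarrow> (nat \<times> nat) set set" where
  "AA n t = {M \<in> matchings n. bseq M = t}"

lemma finite_matchings: "finite (matchings n)"
proof -
  have "matchings n \<subseteq> Pow ({1..2*n} \<times> {1..2*n})"
    unfolding matchings_def using is_matchingD1 by fastforce
  then show ?thesis by (rule finite_subset) auto
qed

lemma sgp_inj: "sgp a b x = sgp a b y \<longleftrightarrow> x = y"
  unfolding sgp_def using sg_inj by (metis prod.collapse prod.inject)

lemma dup_inj: assumes "dup M1 a b = dup M2 a b" shows "M1 = M2"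
proof -
  have nin: "(Suc a, Suc b) \<notin> sgp a b ` M" for M
  proof
    assume "(Suc a, Suc b) \<in> sgp a b ` M"
    then obtain e where "(Suc a, Suc b) = sgp a b e" by auto
    then have "sg a b (fst e) = Suc a" unfolding sgp_def by simp
    then show False using sg_ne1 by metis
  qed
  have "sgp a b ` M1 = dup M1 a b - {(Suc a, Suc b)}" using nin[of M1] unfolding dup_def by auto
  also have "\<dots> = dup M2 a b - {(Suc a, Suc b)}" using assms by simp
  also have "\<dots> = sgp a b ` M2" using nin[of M2] unfolding dup_def by auto
  finally have "sgp a b ` M1 = sgp a b ` M2" .
  moreover have "inj (sgp a b)" using sgp_inj by (meson injI)
  ultimately show ?thesis by (simp add: inj_image_eq_iff)
qed

lemma step_card:
  assumes i: "i < length t" and ti: "t ! i \<ge> 2"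
  shows "card (AA (Suc n) t) = card (AA n (t[i := t ! i - 1]))"
proof -
  define t' where "t' = t[i := t ! i - 1]"
  define f where "f = (\<lambda>M. dup M (fst (sl M ! i)) (snd (sl M ! i)))"
  have fin: "f ` AA n t' = AA (Suc n) t"
  proof
    show "f ` AA n t' \<subseteq> AA (Suc n) t"
    proof
      fix M' assume "M' \<in> f ` AA n t'"
      then obtain M where M: "M \<in> AA n t'" "M' = f M" by blast
      have m: "is_matching n M" and bs: "bseq M = t'" using M unfolding AA_def matchings_def by auto
      have il: "i < length (sl M)" using i bs length_bseq[of M] unfolding t'_def by simp
      obtain a b where ab: "sl M ! i = (a,b)" by fastforce
      have abM: "(a,b) \<in> M" using set_sl[OF m] il ab nth_mem starts_sub by (metis subsetD)
      have "is_matching (Suc n) (dup M a b)" using dup_matching[OF m abM] .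
      moreover have "bseq (dup M a b) = t'[i := Suc (t' ! i)]" using bseq_dup[OF m il ab] bs by simp
      moreover have "t'[i := Suc (t' ! i)] = t" unfolding t'_def using i ti by simp
      ultimately show "M' \<in> AA (Suc n) t" using M(2) ab unfolding f_def AA_def matchings_def by simp
    qed
  next
    show "AA (Suc n) t \<subseteq> f ` AA n t'"
    proof
      fix M assume M: "M \<in> AA (Suc n) t"
      have m: "is_matching (Suc n) M" and bs: "bseq M = t" using M unfolding AA_def matchings_def by auto
      have il: "i < length (sl M)" using i bs length_bseq[of M] by simp
      obtain a b where ab: "sl M ! i = (a,b)" by fastforce
      have abM: "(a,b) \<in> M" using set_sl[OF m] il ab nth_mem starts_sub by (metis subsetD)
      have "Lp M a b \<ge> 2" using bseq_nth[OF il] ab bs ti by simp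
      then have inner: "(Suc a, b - 1) \<in> M" using Lp_less[of 1 M a b] by simp
      have b3: "Suc a < b - 1" using is_matchingD1[OF m inner] by simp
      define c where "c = b - 2"
      have bc: "b = c + 2" using b3 unfolding c_def by auto
      have inner': "(Suc a, Suc c) \<in> M" using inner bc by simp
      obtain M0 where M0: "is_matching n M0" "(a,c) \<in> M0" "M = dup M0 a c"
        using undup[OF m, of a c] abM inner' bc by auto
      have ac: "a < c" using is_matchingD1[OF M0(1,2)] by simp
      have slM: "sl M = map (sgp a c) (sl M0)" using sl_dup[OF M0(1,2)] M0(3) by simp
      have il0: "i < length (sl M0)" using il slM by simp
      have "sgp a c (sl M0 ! i) = (a, b)" using slM il0 ab by simp
      moreover have "sgp a c (a, c) = (a, b)" unfolding sgp_def using sg_a sg_b[OF ac] bc by simp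
      ultimately have ab0: "sl M0 ! i = (a, c)" using sgp_inj by metis
      have bs0: "bseq M = (bseq M0)[i := Suc (bseq M0 ! i)]" using bseq_dup[OF M0(1) il0 ab0] M0(3) by simp
      have li: "i < length (bseq M0)" using il0 length_bseq by metis
      have "bseq M0 = t'"
      proof (rule nth_equalityI)
        show "length (bseq M0) = length t'" using bs0 bs unfolding t'_def by (metis length_list_update)
        fix j assume j: "j < length (bseq M0)"
        show "bseq M0 ! j = t' ! j"
        proof (cases "j = i")
          case True then show ?thesis using bs0 bs li unfolding t'_def by auto
        next
          case False then show ?thesis using bs0 bs li j unfolding t'_def by auto
        qed
      qed
      then have "M0 \<in> AA n t'" using M0(1) unfolding AA_def matchings_def by simp
      moreover have "f M0 = M" unfolding f_def using ab0 M0(3) by simp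
      ultimately show "M \<in> f ` AA n t'" by blast
    qed
  qed
  have inj: "inj_on f (AA n t')"
  proof (rule inj_onI)
    fix M1 M2 assume M1: "M1 \<in> AA n t'" and M2: "M2 \<in> AA n t'" and eq: "f M1 = f M2"
    have m1: "is_matching n M1" and bs1: "bseq M1 = t'" using M1 unfolding AA_def matchings_def by auto
    have m2: "is_matching n M2" and bs2: "bseq M2 = t'" using M2 unfolding AA_def matchings_def by auto
    have il1: "i < length (sl M1)" using i bs1 length_bseq[of M1] unfolding t'_def by simp
    have il2: "i < length (sl M2)" using i bs2 length_bseq[of M2] unfolding t'_def by simp
    obtain a1 b1 where ab1: "sl M1 ! i = (a1,b1)" by fastforce
    obtain a2 b2 where ab2: "sl M2 ! i = (a2,b2)" by fastforce
    have abM1: "(a1,b1) \<in> M1" using set_sl[OF m1] il1 ab1 nth_mem starts_sub by (metis subsetD)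
    have abM2: "(a2,b2) \<in> M2" using set_sl[OF m2] il2 ab2 nth_mem starts_sub by (metis subsetD)
    have l1: "a1 < b1" using is_matchingD1[OF m1 abM1] by simp
    have l2: "a2 < b2" using is_matchingD1[OF m2 abM2] by simp
    have e: "dup M1 a1 b1 = dup M2 a2 b2" using eq ab1 ab2 unfolding f_def by simp
    have "sl (dup M1 a1 b1) ! i = (a1, b1 + 2)"
      using sl_dup[OF m1 abM1] il1 ab1 unfolding sgp_def using sg_a sg_b[OF l1] by simp
    moreover have "sl (dup M2 a2 b2) ! i = (a2, b2 + 2)"
      using sl_dup[OF m2 abM2] il2 ab2 unfolding sgp_def using sg_a sg_b[OF l2] by simp
    ultimately have "a1 = a2" "b1 = b2" using e by auto
    then show "M1 = M2" using e dup_inj by metis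
  qed
  have "card (AA n t') = card (AA (Suc n) t)" using card_image[OF inj] fin by simp
  then show ?thesis unfolding t'_def by simp
qed

lemma decomp:
  assumes m: "is_matching (Suc n) M" and il: "i < length (sl M)" and ti: "bseq M ! i \<ge> 2"
  shows "\<exists>M0 a c. is_matching n M0 \<and> i < length (sl M0) \<and> sl M0 ! i = (a,c) \<and> M = dup M0 a c
     \<and> bseq M = (bseq M0)[i := Suc (bseq M0 ! i)]"
proof -
  obtain a b where ab: "sl M ! i = (a,b)" by fastforce
  have abM: "(a,b) \<in> M" using set_sl[OF m] il ab nth_mem starts_sub by (metis subsetD)
  have "Lp M a b \<ge> 2" using bseq_nth[OF il] ab ti by simp
  then have inner: "(Suc a, b - 1) \<in> M" using Lp_less[of 1 M a b] by simp
  have b3: "Suc a < b - 1" using is_matchingD1[OF m inner] by simp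
  define c where "c = b - 2"
  have bc: "b = c + 2" using b3 unfolding c_def by auto
  have inner': "(Suc a, Suc c) \<in> M" using inner bc by simp
  obtain M0 where M0: "is_matching n M0" "(a,c) \<in> M0" "M = dup M0 a c"
    using undup[OF m, of a c] abM inner' bc by auto
  have ac: "a < c" using is_matchingD1[OF M0(1,2)] by simp
  have slM: "sl M = map (sgp a c) (sl M0)" using sl_dup[OF M0(1,2)] M0(3) by simp
  have il0: "i < length (sl M0)" using il slM by simp
  have "sgp a c (sl M0 ! i) = (a, b)" using slM il0 ab by simp
  moreover have "sgp a c (a, c) = (a, b)" unfolding sgp_def using sg_a sg_b[OF ac] bc by simp
  ultimately have ab0: "sl M0 ! i = (a, c)" using sgp_inj by metis
  have bs0: "bseq M = (bseq M0)[i := Suc (bseq M0 ! i)]" using bseq_dup[OF M0(1) il0 ab0] M0(3) by simp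
  show ?thesis using M0 il0 ab0 bs0 by blast
qed

lemma Lp_ge2: "is_matching n M \<Longrightarrow> 2 \<le> Lp M x y \<longleftrightarrow> (x,y) \<in> M \<and> (Suc x, y - 1) \<in> M"
  using Lp_ge_iff[of n M 2 x y] by (auto simp: less_Suc_eq numeral_2_eq_2)

lemma Lp_ge3: "is_matching n M \<Longrightarrow> 3 \<le> Lp M x y \<longleftrightarrow> (x,y) \<in> M \<and> (Suc x, y - 1) \<in> M \<and> (x + 2, y - 2) \<in> M"
  using Lp_ge_iff[of n M 3 x y] by (auto simp: less_Suc_eq numeral_3_eq_3 numeral_2_eq_2)

lemma occ21_cnt: assumes m: "is_matching n M" shows "occ21 M = cnt 2 M"
proof -
  define h where "h = (\<lambda>(i::nat, j::nat). (i+1, j+2))"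
  have inj: "inj h" unfolding h_def by (auto intro!: injI)
  have "h ` {(i,j). (i+1, j+2) \<in> M \<and> (i+2, j+1) \<in> M} = {e \<in> M. 2 \<le> Lp M (fst e) (snd e)}"
  proof
    show "h ` {(i,j). (i+1, j+2) \<in> M \<and> (i+2, j+1) \<in> M} \<subseteq> {e \<in> M. 2 \<le> Lp M (fst e) (snd e)}"
      unfolding h_def using Lp_ge2[OF m] by auto
    show "{e \<in> M. 2 \<le> Lp M (fst e) (snd e)} \<subseteq> h ` {(i,j). (i+1, j+2) \<in> M \<and> (i+2, j+1) \<in> M}"
    proof
      fix e assume e: "e \<in> {e \<in> M. 2 \<le> Lp M (fst e) (snd e)}"
      obtain x y where xy: "e = (x,y)" by fastforce
      have h1: "(x,y) \<in> M" "(Suc x, y - 1) \<in> M" using e xy Lp_ge2[OF m] by auto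
      have "1 \<le> x" "Suc x < y - 1" using is_matchingD1[OF m h1(1)] is_matchingD1[OF m h1(2)] by auto
      then have eqs: "x - 1 + 1 = x" "y - 2 + 2 = y" "x - 1 + 2 = Suc x" "y - 2 + 1 = y - 1" by auto
      then have "e = h (x - 1, y - 2)" "(x - 1 + 1, y - 2 + 2) \<in> M" "(x - 1 + 2, y - 2 + 1) \<in> M"
        using xy h1 unfolding h_def by simp_all
      then show "e \<in> h ` {(i,j). (i+1, j+2) \<in> M \<and> (i+2, j+1) \<in> M}" by blast
    qed
  qed
  note eq = this
  have "card (h ` {(i,j). (i+1, j+2) \<in> M \<and> (i+2, j+1) \<in> M}) = card {(i,j). (i+1, j+2) \<in> M \<and> (i+2, j+1) \<in> M}"
    by (rule card_image[OF inj_on_subset[OF inj subset_UNIV]])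
  then show ?thesis unfolding occ21_def cnt_def eq by simp
qed

lemma occ321_cnt: assumes m: "is_matching n M" shows "occ321 M = cnt 3 M"
proof -
  define h where "h = (\<lambda>(i::nat, j::nat). (i+1, j+3))"
  have inj: "inj h" unfolding h_def by (auto intro!: injI)
  have "h ` {(i,j). (i+1, j+3) \<in> M \<and> (i+2, j+2) \<in> M \<and> (i+3, j+1) \<in> M} = {e \<in> M. 3 \<le> Lp M (fst e) (snd e)}"
  proof
    show "h ` {(i,j). (i+1, j+3) \<in> M \<and> (i+2, j+2) \<in> M \<and> (i+3, j+1) \<in> M} \<subseteq> {e \<in> M. 3 \<le> Lp M (fst e) (snd e)}"
    proof
      fix e assume "e \<in> h ` {(i,j). (i+1, j+3) \<in> M \<and> (i+2, j+2) \<in> M \<and> (i+3, j+1) \<in> M}"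
      then obtain i j where ij: "e = (i+1, j+3)" "(i+1, j+3) \<in> M" "(i+2, j+2) \<in> M" "(i+3, j+1) \<in> M"
        unfolding h_def by auto
      have "Suc (i+1) = i + 2" "j + 3 - 1 = j + 2" "i + 1 + 2 = i + 3" "j + 3 - 2 = j + 1" by simp_all
      then have "3 \<le> Lp M (i+1) (j+3)" using ij Lp_ge3[OF m, of "i+1" "j+3"] by metis
      then show "e \<in> {e \<in> M. 3 \<le> Lp M (fst e) (snd e)}" using ij by simp
    qed
    show "{e \<in> M. 3 \<le> Lp M (fst e) (snd e)} \<subseteq> h ` {(i,j). (i+1, j+3) \<in> M \<and> (i+2, j+2) \<in> M \<and> (i+3, j+1) \<in> M}"
    proof
      fix e assume e: "e \<in> {e \<in> M. 3 \<le> Lp M (fst e) (snd e)}"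
      obtain x y where xy: "e = (x,y)" by fastforce
      have h1: "(x,y) \<in> M" "(Suc x, y - 1) \<in> M" "(x+2, y-2) \<in> M" using e xy Lp_ge3[OF m] by auto
      have "1 \<le> x" "x + 2 < y - 2" using is_matchingD1[OF m h1(1)] is_matchingD1[OF m h1(3)] by auto
      then have eqs: "x - 1 + 1 = x" "y - 3 + 3 = y" "x - 1 + 2 = Suc x" "y - 3 + 2 = y - 1"
          "x - 1 + 3 = x + 2" "y - 3 + 1 = y - 2" by auto
      then have "e = h (x - 1, y - 3)" "(x - 1 + 1, y - 3 + 3) \<in> M" "(x - 1 + 2, y - 3 + 2) \<in> M"
          "(x - 1 + 3, y - 3 + 1) \<in> M"
        using xy h1 unfolding h_def by simp_all
      then show "e \<in> h ` {(i,j). (i+1, j+3) \<in> M \<and> (i+2, j+2) \<in> M \<and> (i+3, j+1) \<in> M}" by blast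
    qed
  qed
  note eq = this
  have "card (h ` {(i,j). (i+1, j+3) \<in> M \<and> (i+2, j+2) \<in> M \<and> (i+3, j+1) \<in> M}) = card {(i,j). (i+1, j+3) \<in> M \<and> (i+2, j+2) \<in> M \<and> (i+3, j+1) \<in> M}"
    by (rule card_image[OF inj_on_subset[OF inj subset_UNIV]])
  then show ?thesis unfolding occ321_def cnt_def eq by simp
qed

lemma cnt_sum: "finite M \<Longrightarrow> cnt k M = (\<Sum>e\<in>M. if k \<le> Lp M (fst e) (snd e) then 1 else 0)"
  unfolding cnt_def by (simp add: sum.inter_filter[symmetric])

lemma cnt_dup:
  assumes m: "is_matching n M" and abs: "(a,b) \<in> starts M"
  shows "cnt k (dup M a b) = cnt k M + (if k \<le> Suc (Lp M a b) then 1 else 0)"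
proof -
  have ab: "(a,b) \<in> M" using abs starts_sub by blast
  have ab': "a < b" using is_matchingD1[OF m ab] by simp
  have fin: "finite M" using matching_finite[OF m] .
  define M' where "M' = dup M a b"
  have m': "is_matching (Suc n) M'" unfolding M'_def using dup_matching[OF m ab] .
  define ind where "ind = (\<lambda>N e. if k \<le> Lp N (fst e) (snd e) then 1 else (0::nat))"
  have nin: "(Suc a, Suc b) \<notin> sgp a b ` M"
  proof
    assume "(Suc a, Suc b) \<in> sgp a b ` M"
    then obtain e where "(Suc a, Suc b) = sgp a b e" by auto
    then have "sg a b (fst e) = Suc a" unfolding sgp_def by simp
    then show False using sg_ne1 by metis
  qed
  have inj: "inj_on (sgp a b) M" using sgp_inj by (meson inj_onI)
  have "cnt k M' = (\<Sum>e\<in>M'. ind M' e)" using cnt_sum matching_finite[OF m'] unfolding ind_def by simp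
  also have "\<dots> = (\<Sum>e\<in>sgp a b ` M. ind M' e) + ind M' (Suc a, Suc b)"
    unfolding M'_def dup_def using nin fin by (simp add: sum.insert_if)
  also have "(\<Sum>e\<in>sgp a b ` M. ind M' e) = (\<Sum>e\<in>M. ind M' (sgp a b e))"
    using sum.reindex[OF inj] by simp
  also have "\<dots> = ind M' (sgp a b (a,b)) + (\<Sum>e\<in>M - {(a,b)}. ind M' (sgp a b e))"
    using sum.remove[OF fin ab] by simp
  also have "(\<Sum>e\<in>M - {(a,b)}. ind M' (sgp a b e)) = (\<Sum>e\<in>M - {(a,b)}. ind M e)"
  proof (rule sum.cong)
    fix e assume "e \<in> M - {(a,b)}"
    then show "ind M' (sgp a b e) = ind M e"
      using Lp_keep[OF m abs, of e] unfolding ind_def sgp_def M'_def by simp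
  qed simp
  also have "ind M' (sgp a b (a,b)) = (if k \<le> Suc (Lp M a b) then 1 else 0)"
    using L2(2)[OF m ab] sg_a sg_b[OF ab'] unfolding ind_def sgp_def M'_def by simp
  also have "ind M' (Suc a, Suc b) = ind M (a,b)"
    using L2(1)[OF m ab] unfolding ind_def M'_def by simp
  finally have "cnt k M' = (if k \<le> Suc (Lp M a b) then 1 else 0) + (ind M (a,b) + (\<Sum>e\<in>M - {(a,b)}. ind M e))"
    by simp
  also have "ind M (a,b) + (\<Sum>e\<in>M - {(a,b)}. ind M e) = cnt k M"
    using sum.remove[OF fin ab, of "ind M"] cnt_sum[OF fin] unfolding ind_def by simp
  finally show ?thesis unfolding M'_def by simp
qed

definition gg :: "nat list \<Rightarrow> nat" where
  "gg t = sum_list (map (\<lambda>x. x - 2) t)"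

lemma bseq_pos: "is_matching n M \<Longrightarrow> x \<in> set (bseq M) \<Longrightarrow> x \<ge> 1"
proof -
  assume m: "is_matching n M" and x: "x \<in> set (bseq M)"
  then obtain e where e: "e \<in> set (sl M)" "x = Lp M (fst e) (snd e)" unfolding bseq_def by auto
  have "(fst e, snd e) \<in> M" using e(1) set_sl[OF m] starts_sub by auto
  then show ?thesis using Lp_pos[OF m] e(2) by blast
qed

lemma small_bseq:
  assumes m: "is_matching n M" and sm: "\<forall>x\<in>set (bseq M). x < 2"
  shows "bseq M = replicate (length (bseq M)) 1"
proof -
  have "\<forall>x\<in>set (bseq M). x = 1" using sm bseq_pos[OF m] by fastforce
  then show ?thesis by (metis replicate_length_same)
qed

lemma cnt_mono: "finite M \<Longrightarrow> k \<le> k' \<Longrightarrow> cnt k' M \<le> cnt k M"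
  unfolding cnt_def by (rule card_mono) auto

lemma occ321_bseq: "is_matching n M \<Longrightarrow> cnt 3 M = gg (bseq M)"
proof (induction n arbitrary: M)
  case 0
  then have "M = {}" using matchings0 by blast
  then show ?case unfolding cnt_def gg_def using bseq_empty by simp
next
  case (Suc n)
  note m = Suc.prems
  show ?case
  proof (cases "\<exists>i < length (sl M). bseq M ! i \<ge> 2")
    case True
    then obtain i where i: "i < length (sl M)" "bseq M ! i \<ge> 2" by blast
    obtain M0 a c where D: "is_matching n M0" "i < length (sl M0)" "sl M0 ! i = (a,c)" "M = dup M0 a c"
      "bseq M = (bseq M0)[i := Suc (bseq M0 ! i)]" using decomp[OF m i] by blast
    have acs: "(a,c) \<in> starts M0" using set_sl[OF D(1)] D(2,3) nth_mem by metis
    define L0 where "L0 = bseq M0 ! i"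
    have L0: "L0 = Lp M0 a c" unfolding L0_def using bseq_nth[OF D(2)] D(3) by simp
    have "cnt 3 M = cnt 3 M0 + (if 3 \<le> Suc L0 then 1 else 0)" using cnt_dup[OF D(1) acs] D(4) L0 by simp
    also have "cnt 3 M0 = gg (bseq M0)" using Suc.IH[OF D(1)] .
    finally have c: "cnt 3 M = gg (bseq M0) + (if 3 \<le> Suc L0 then 1 else 0)" .
    have li: "i < length (bseq M0)" using D(2) length_bseq by metis
    have "gg (bseq M) = sum_list ((map (\<lambda>x. x - 2) (bseq M0))[i := Suc L0 - 2])"
      unfolding gg_def D(5) L0_def by (simp add: map_update)
    also have "\<dots> = gg (bseq M0) + (Suc L0 - 2) - (L0 - 2)"
      using sum_list_update[of i "map (\<lambda>x. x - 2) (bseq M0)" "Suc L0 - 2"] li unfolding gg_def L0_def by simp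
    finally have "gg (bseq M) = gg (bseq M0) + (Suc L0 - 2) - (L0 - 2)" .
    moreover have "L0 - 2 \<le> gg (bseq M0)"
      using elem_le_sum_list[of i "map (\<lambda>x. x - 2) (bseq M0)"] li unfolding gg_def L0_def by simp
    ultimately show ?thesis using c by auto
  next
    case False
    then have sm: "\<forall>x\<in>set (bseq M). x < 2" using length_bseq by (metis in_set_conv_nth not_less)
    have "cnt 2 M = 0" using base_char[OF m] small_bseq[OF m sm] by blast
    then have "cnt 3 M = 0" using cnt_mono[OF matching_finite[OF m], of 2 3] by simp
    moreover have "gg (bseq M) = 0"
    proof -
      have "\<forall>x\<in>set (map (\<lambda>x. x - 2) (bseq M)). x = 0" using sm by auto
      then show ?thesis unfolding gg_def using sum_list_eq_0_iff by blast
    qed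
    ultimately show ?thesis by simp
  qed
qed

lemma AA0: "t \<noteq> [] \<Longrightarrow> AA 0 t = {}"
  unfolding AA_def matchings_def using matchings0 bseq_empty by auto

lemma fiber:
  "0 \<notin> set t \<Longrightarrow> card (AA n t) = (if sum_list t = n then a_num (length t) 0 else 0)"
proof (induction "sum_list t" arbitrary: n t rule: less_induct)
  case less
  show ?case
  proof (cases "\<exists>i < length t. t ! i \<ge> 2")
    case True
    then obtain i where i: "i < length t" "t ! i \<ge> 2" by blast
    have sge: "sum_list t \<ge> 2" using elem_le_sum_list[OF i(1)] i(2) by simp
    show ?thesis
    proof (cases n)
      case 0
      have "t \<noteq> []" using i by auto
      then have "AA n t = {}" using AA0 0 by simp
      moreover have "sum_list t \<noteq> n" using 0 sge by linarith
      ultimately show ?thesis by (simp only: card.empty if_False)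
    next
      case (Suc n')
      define t' where "t' = t[i := t ! i - 1]"
      have "card (AA n t) = card (AA n' t')" using step_card[OF i] Suc unfolding t'_def by simp
      have z: "0 \<notin> set t'" unfolding t'_def using less.prems i set_update_subset_insert by fastforce
      have st: "sum_list t' = sum_list t - 1"
        unfolding t'_def using sum_list_update[OF i(1), of "t ! i - 1"] i elem_le_sum_list[OF i(1)] by simp
      have "card (AA n' t') = (if sum_list t' = n' then a_num (length t') 0 else 0)"
        using less.hyps[of t' n'] z st sge by simp
      moreover have "length t' = length t" unfolding t'_def by simp
      ultimately show ?thesis using \<open>card (AA n t) = card (AA n' t')\<close> st Suc sge by auto
    qed
  next
    case False
    have all1: "\<forall>x\<in>set t. x = 1"
    proof
      fix x assume "x \<in> set t"
      then obtain j where j: "j < length t" "t ! j = x" by (metis in_set_conv_nth)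
      then have "x < 2" using False by auto
      moreover have "x \<noteq> 0" using less.prems \<open>x \<in> set t\<close> by (metis gr0I)
      ultimately show "x = 1" by arith
    qed
    then have tr: "t = replicate (length t) 1" by (metis replicate_length_same)
    have "AA n t = (if length t = n then {M \<in> matchings n. occ21 M = 0} else {})"
    proof -
      have "M \<in> AA n t \<longleftrightarrow> M \<in> (if length t = n then {M \<in> matchings n. occ21 M = 0} else {})" for M
      proof (cases "is_matching n M")
        case True
        have "M \<in> AA n t \<longleftrightarrow> bseq M = replicate (length t) 1" unfolding AA_def matchings_def using True tr by simp
        also have "\<dots> \<longleftrightarrow> length t = n \<and> occ21 M = 0" using base_char[OF True, of "length t"] occ21_cnt[OF True] by simp
        finally show ?thesis unfolding matchings_def using True by simp
      next
        case False then show ?thesis unfolding AA_def matchings_def by auto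
      qed
      then show ?thesis by blast
    qed
    moreover have "sum_list t = length t"
    proof -
      have "sum_list t = sum_list (replicate (length t) (1::nat))" using tr by simp
      then show ?thesis by (simp add: sum_list_replicate)
    qed
    ultimately show ?thesis unfolding a_num_def by auto
  qed
qed

fun rb :: "bool list \<Rightarrow> nat list \<Rightarrow> nat list" where
  "rb [] e = []"
| "rb (False # p) e = 1 # rb p e"
| "rb (True # p) [] = 2 # rb p []"
| "rb (True # p) (x # e) = (x + 2) # rb p e"

definition cntT :: "bool list \<Rightarrow> nat" where "cntT p = length (filter id p)"
definition pp :: "nat list \<Rightarrow> bool list" where "pp t = map (\<lambda>x. 2 \<le> x) t"
definition ee :: "nat list \<Rightarrow> nat list" where "ee t = map (\<lambda>x. x - 2) (filter (\<lambda>x. 2 \<le> x) t)"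

lemma cntT_simps[simp]: "cntT [] = 0" "cntT (True # p) = Suc (cntT p)" "cntT (False # p) = cntT p"
  unfolding cntT_def by simp_all

lemma rb_props:
  "length e = cntT p \<Longrightarrow> length (rb p e) = length p \<and> pp (rb p e) = p \<and> ee (rb p e) = e
     \<and> 0 \<notin> set (rb p e) \<and> sum_list (rb p e) = length p + cntT p + sum_list e \<and> gg (rb p e) = sum_list e"
proof (induction p arbitrary: e)
  case Nil then show ?case by (simp add: pp_def ee_def gg_def)
next
  case (Cons b p)
  show ?case
  proof (cases b)
    case False
    then show ?thesis using Cons.IH[of e] Cons.prems by (simp add: pp_def ee_def gg_def)
  next
    case True
    then obtain x e' where e: "e = x # e'" using Cons.prems by (cases e) auto
    then show ?thesis using Cons.IH[of e'] Cons.prems True by (simp add: pp_def ee_def gg_def)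
  qed
qed

lemma rb_inv: "0 \<notin> set t \<Longrightarrow> rb (pp t) (ee t) = t \<and> length (ee t) = cntT (pp t)"
proof (induction t)
  case Nil then show ?case by (simp add: pp_def ee_def)
next
  case (Cons x t)
  show ?case
  proof (cases "2 \<le> x")
    case True
    then have "pp (x # t) = True # pp t" "ee (x # t) = (x - 2) # ee t" by (simp_all add: pp_def ee_def)
    then show ?thesis using Cons True by simp
  next
    case False
    then have "x = 1" using Cons.prems by (cases x) auto
    then have "pp (x # t) = False # pp t" "ee (x # t) = ee t" by (simp_all add: pp_def ee_def)
    then show ?thesis using Cons \<open>x = 1\<close> by simp
  qed
qed

definition TT :: "nat \<Rightarrow> nat \<Rightarrow> nat list set" where
  "TT n k = {t. 0 \<notin> set t \<and> sum_list t = n \<and> gg t = k}"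

definition QQ :: "nat \<Rightarrow> nat \<Rightarrow> (bool list \<times> nat list) set" where
  "QQ n k = (SIGMA p:{p. length p + cntT p + k = n}. {e. length e = cntT p \<and> sum_list e = k})"

lemma TT_image: "TT n k = (\<lambda>(p,e). rb p e) ` QQ n k"
proof
  show "TT n k \<subseteq> (\<lambda>(p,e). rb p e) ` QQ n k"
  proof
    fix t assume t: "t \<in> TT n k"
    then have z: "0 \<notin> set t" unfolding TT_def by simp
    have inv: "rb (pp t) (ee t) = t" "length (ee t) = cntT (pp t)" using rb_inv[OF z] by auto
    have pr: "length (rb (pp t) (ee t)) = length (pp t)"
      "sum_list (rb (pp t) (ee t)) = length (pp t) + cntT (pp t) + sum_list (ee t)"
      "gg (rb (pp t) (ee t)) = sum_list (ee t)" using rb_props[OF inv(2)] by auto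
    have "(pp t, ee t) \<in> QQ n k" using t inv pr unfolding TT_def QQ_def by auto
    then show "t \<in> (\<lambda>(p,e). rb p e) ` QQ n k" using inv(1) by force
  qed
next
  show "(\<lambda>(p,e). rb p e) ` QQ n k \<subseteq> TT n k"
  proof
    fix t assume "t \<in> (\<lambda>(p,e). rb p e) ` QQ n k"
    then obtain p e where pe: "(p,e) \<in> QQ n k" "t = rb p e" by auto
    have l: "length e = cntT p" using pe unfolding QQ_def by auto
    show "t \<in> TT n k" using rb_props[OF l] pe unfolding QQ_def TT_def by auto
  qed
qed

lemma TT_inj: "inj_on (\<lambda>(p,e). rb p e) (QQ n k)"
proof (rule inj_onI)
  fix x y assume x: "x \<in> QQ n k" and y: "y \<in> QQ n k" and eq: "(\<lambda>(p,e). rb p e) x = (\<lambda>(p,e). rb p e) y"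
  obtain p1 e1 where 1: "x = (p1,e1)" by fastforce
  obtain p2 e2 where 2: "y = (p2,e2)" by fastforce
  have l1: "length e1 = cntT p1" using x 1 unfolding QQ_def by auto
  have l2: "length e2 = cntT p2" using y 2 unfolding QQ_def by auto
  have "rb p1 e1 = rb p2 e2" using eq 1 2 by simp
  then have "pp (rb p1 e1) = pp (rb p2 e2)" "ee (rb p1 e1) = ee (rb p2 e2)" by simp_all
  then show "x = y" using rb_props[OF l1] rb_props[OF l2] 1 2 by simp
qed

lemma finite_bool_lists: "finite {p::bool list. length p \<le> n}"
  using finite_lists_length_le[of "UNIV :: bool set" n] by simp

lemma finite_E: "finite {e::nat list. length e = s \<and> sum_list e = k}"
proof -
  have "{e::nat list. length e = s \<and> sum_list e = k} \<subseteq> {e. set e \<subseteq> {0..k} \<and> length e \<le> s}"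
    using member_le_sum_list by fastforce
  then show ?thesis using finite_lists_length_le[of "{0..k}" s] finite_subset by blast
qed

lemma card_bool: "card {p::bool list. length p = m \<and> cntT p = s} = m choose s"
proof (induction m arbitrary: s)
  case 0
  have "{p::bool list. length p = 0 \<and> cntT p = s} = (if s = 0 then {[]} else {})" by auto
  then show ?case by simp
next
  case (Suc m)
  have split: "{p::bool list. length p = Suc m \<and> cntT p = s} =
     (Cons False) ` {p. length p = m \<and> cntT p = s} \<union> (Cons True) ` {p. length p = m \<and> Suc (cntT p) = s}"
  proof
    show "{p::bool list. length p = Suc m \<and> cntT p = s} \<subseteq>
     (Cons False) ` {p. length p = m \<and> cntT p = s} \<union> (Cons True) ` {p. length p = m \<and> Suc (cntT p) = s}"
    proof
      fix p :: "bool list" assume "p \<in> {p. length p = Suc m \<and> cntT p = s}"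
      then obtain b q where p: "p = b # q" "length q = m" "cntT p = s" by (cases p) auto
      then show "p \<in> (Cons False) ` {p. length p = m \<and> cntT p = s} \<union> (Cons True) ` {p. length p = m \<and> Suc (cntT p) = s}"
        by (cases b) auto
    qed
  qed auto
  have fin: "finite {p::bool list. length p = m \<and> P p}" for P
    by (rule finite_subset[OF _ finite_bool_lists[of m]]) auto
  have disj: "(Cons False) ` {p. length p = m \<and> cntT p = s} \<inter> (Cons True) ` {p. length p = m \<and> Suc (cntT p) = s} = {}"
    by auto
  have c1: "card ((Cons False) ` {p::bool list. length p = m \<and> cntT p = s}) = m choose s"
    using card_image[of "Cons False"] Suc.IH by simp
  have c2: "card ((Cons True) ` {p::bool list. length p = m \<and> Suc (cntT p) = s}) = (if s = 0 then 0 else m choose (s - 1))"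
  proof (cases s)
    case 0 then show ?thesis by simp
  next
    case (Suc s')
    then show ?thesis using card_image[of "Cons True"] Suc.IH[of s'] by simp
  qed
  have "card {p::bool list. length p = Suc m \<and> cntT p = s} = (m choose s) + (if s = 0 then 0 else m choose (s - 1))"
    unfolding split using card_Un_disjoint[OF finite_imageI[OF fin] finite_imageI[OF fin] disj] c1 c2 by simp
  then show ?case by (cases s) simp_all
qed

lemma sumTT:
  "(\<Sum>t\<in>TT n k. (\<phi>::nat \<Rightarrow> nat) (length t)) = (\<Sum>s=0..n. ((k+s-1) choose k) * ((n-k-s) choose s) * \<phi> (n-k-s))"
proof -
  define P where "P = {p::bool list. length p + cntT p + k = n}"
  define E where "E = (\<lambda>p. {e::nat list. length e = cntT p \<and> sum_list e = k})"
  have QQ: "QQ n k = Sigma P E" unfolding QQ_def P_def E_def by simp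
  have cntT_le: "cntT p \<le> length p" for p unfolding cntT_def by simp
  have finP: "finite P"
    by (rule finite_subset[OF _ finite_bool_lists[of n]]) (auto simp: P_def)
  have finE: "\<forall>p\<in>P. finite (E p)" unfolding E_def using finite_E by blast
  have "(\<Sum>t\<in>TT n k. \<phi> (length t)) = (\<Sum>x\<in>QQ n k. \<phi> (length ((\<lambda>(p,e). rb p e) x)))"
    unfolding TT_image using sum.reindex[OF TT_inj] by simp
  also have "\<dots> = (\<Sum>x\<in>QQ n k. \<phi> (length (fst x)))"
  proof (rule sum.cong)
    fix x assume "x \<in> QQ n k"
    then obtain p e where x: "x = (p,e)" "length e = cntT p" unfolding QQ_def by auto
    then show "\<phi> (length ((\<lambda>(p,e). rb p e) x)) = \<phi> (length (fst x))" using rb_props[OF x(2)] by simp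
  qed simp
  also have "\<dots> = (\<Sum>p\<in>P. \<Sum>e\<in>E p. \<phi> (length p))"
    unfolding QQ using sum.Sigma[OF finP finE, of "\<lambda>p e. \<phi> (length p)"] by (simp add: case_prod_beta)
  also have "\<dots> = (\<Sum>p\<in>P. ((k + cntT p - 1) choose k) * \<phi> (length p))"
  proof (rule sum.cong)
    fix p assume "p \<in> P"
    have "card (E p) = (k + cntT p - 1) choose k" unfolding E_def using card_length_sum_list by simp
    then show "(\<Sum>e\<in>E p. \<phi> (length p)) = ((k + cntT p - 1) choose k) * \<phi> (length p)" by simp
  qed simp
  also have "\<dots> = (\<Sum>s\<in>{0..n}. \<Sum>p\<in>{p. p \<in> P \<and> cntT p = s}. ((k + cntT p - 1) choose k) * \<phi> (length p))"
    by (rule sum.group[symmetric, OF finP]) (use cntT_le in \<open>auto simp: P_def\<close>)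
  also have "\<dots> = (\<Sum>s=0..n. ((k+s-1) choose k) * ((n-k-s) choose s) * \<phi> (n-k-s))"
  proof (rule sum.cong)
    fix s assume "s \<in> {0..n}"
    have inner: "(\<Sum>p\<in>{p. p \<in> P \<and> cntT p = s}. ((k + cntT p - 1) choose k) * \<phi> (length p))
        = card {p. p \<in> P \<and> cntT p = s} * (((k + s - 1) choose k) * \<phi> (n - k - s))"
    proof -
      have "(\<Sum>p\<in>{p. p \<in> P \<and> cntT p = s}. ((k + cntT p - 1) choose k) * \<phi> (length p))
          = (\<Sum>p\<in>{p. p \<in> P \<and> cntT p = s}. ((k + s - 1) choose k) * \<phi> (n - k - s))"
        by (rule sum.cong) (auto simp: P_def)
      then show ?thesis by simp
    qed
    show "(\<Sum>p\<in>{p. p \<in> P \<and> cntT p = s}. ((k + cntT p - 1) choose k) * \<phi> (length p))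
        = ((k+s-1) choose k) * ((n-k-s) choose s) * \<phi> (n-k-s)"
    proof (cases "s + k \<le> n")
      case True
      have "{p. p \<in> P \<and> cntT p = s} = {p. length p = n - k - s \<and> cntT p = s}"
        using True unfolding P_def by auto
      then have c: "card {p. p \<in> P \<and> cntT p = s} = (n - k - s) choose s" using card_bool by simp
      show ?thesis unfolding inner c by (simp only: mult.assoc mult.left_commute)
    next
      case False
      have "{p. p \<in> P \<and> cntT p = s} = {}" using False unfolding P_def by auto
      then have c0: "card {p. p \<in> P \<and> cntT p = s} = 0" by (simp only: card.empty)
      have z: "((k+s-1) choose k) * ((n-k-s) choose s) = 0"
      proof (cases s)
        case 0
        then have "k \<ge> 1" using False by simp
        then show ?thesis using 0 by simp
      next
        case (Suc s')
        have "n - k - s = 0" using False by simp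
        then show ?thesis using Suc by simp
      qed
      show ?thesis unfolding inner c0 using z by simp
    qed
  qed simp
  finally show ?thesis .
qed

lemma c_num_TT: "c_num n k = (\<Sum>t\<in>TT n k. a_num (length t) 0)"
proof -
  have finT: "finite (TT n k)"
  proof (rule finite_subset[OF _ finite_lists_length_le[of "{0..n}" n]])
    show "TT n k \<subseteq> {xs. set xs \<subseteq> {0..n} \<and> length xs \<le> n}"
    proof
      fix t assume t: "t \<in> TT n k"
      then have z: "0 \<notin> set t" "sum_list t = n" unfolding TT_def by auto
      have "length t \<le> sum_list t" using z(1)
      proof (induction t)
        case (Cons x t) then show ?case by (cases x) auto
      qed simp
      moreover have "set t \<subseteq> {0..n}" using member_le_sum_list z(2) by fastforce
      ultimately show "t \<in> {xs. set xs \<subseteq> {0..n} \<and> length xs \<le> n}" using z by simp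
    qed
  qed simp
  have eq: "{M \<in> matchings n. occ321 M = k} = (\<Union>t\<in>TT n k. AA n t)"
  proof
    show "{M \<in> matchings n. occ321 M = k} \<subseteq> (\<Union>t\<in>TT n k. AA n t)"
    proof
      fix M assume M: "M \<in> {M \<in> matchings n. occ321 M = k}"
      then have m: "is_matching n M" and o: "occ321 M = k" unfolding matchings_def by auto
      have z: "0 \<notin> set (bseq M)" using bseq_pos[OF m] by fastforce
      have g: "gg (bseq M) = k" using o occ321_cnt[OF m] occ321_bseq[OF m] by simp
      have inA: "M \<in> AA n (bseq M)" using m unfolding AA_def matchings_def by simp
      have "finite (AA n (bseq M))" using finite_matchings unfolding AA_def by simp
      then have "card (AA n (bseq M)) \<noteq> 0" using inA by auto
      then have "sum_list (bseq M) = n" using fiber[OF z, of n] by presburger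
      then have "bseq M \<in> TT n k" using z g unfolding TT_def by simp
      then show "M \<in> (\<Union>t\<in>TT n k. AA n t)" using inA by blast
    qed
    show "(\<Union>t\<in>TT n k. AA n t) \<subseteq> {M \<in> matchings n. occ321 M = k}"
    proof
      fix M assume "M \<in> (\<Union>t\<in>TT n k. AA n t)"
      then obtain t where t: "t \<in> TT n k" "M \<in> AA n t" by blast
      then have m: "is_matching n M" "bseq M = t" unfolding AA_def matchings_def by auto
      have "occ321 M = k" using occ321_cnt[OF m(1)] occ321_bseq[OF m(1)] m(2) t(1) unfolding TT_def by simp
      then show "M \<in> {M \<in> matchings n. occ321 M = k}" using m unfolding matchings_def by simp
    qed
  qed
  have "c_num n k = card (\<Union>t\<in>TT n k. AA n t)" unfolding c_num_def eq ..
  also have "\<dots> = (\<Sum>t\<in>TT n k. card (AA n t))"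
    by (rule card_UN_disjoint[OF finT]) (auto simp: AA_def finite_matchings)
  also have "\<dots> = (\<Sum>t\<in>TT n k. a_num (length t) 0)"
    by (rule sum.cong) (auto simp: TT_def fiber)
  finally show ?thesis .
qed

theorem theorem3:
  fixes n :: nat
  assumes "n > 0"
  shows "c_num n 0 = (\<Sum>s=0..n div 2. ((n - s) choose s) * a_num (n - s) 0)
         \<and> (\<forall>k::nat. k > 0 \<longrightarrow>
           c_num n k = (\<Sum>s=1..(n - k) div 2.
              ((k + s - 1) choose k) * ((n - k - s) choose s) * a_num (n - k - s) 0))"
proof
  have base: "c_num n k = (\<Sum>s=0..n. ((k+s-1) choose k) * ((n-k-s) choose s) * a_num (n-k-s) 0)" for k
    using c_num_TT[of n k] sumTT[where n=n and k=k and \<phi>="\<lambda>m. a_num m 0"] by simp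
  have "c_num n 0 = (\<Sum>s=0..n. ((n-s) choose s) * a_num (n-s) 0)" using base[of 0] by simp
  also have "\<dots> = (\<Sum>s=0..n div 2. ((n - s) choose s) * a_num (n - s) 0)"
  proof (rule sum.mono_neutral_right)
    show "\<forall>i\<in>{0..n} - {0..n div 2}. ((n - i) choose i) * a_num (n - i) 0 = 0"
    proof
      fix i assume "i \<in> {0..n} - {0..n div 2}"
      then have "n - i < i" by auto
      then show "((n - i) choose i) * a_num (n - i) 0 = 0" by simp
    qed
  qed auto
  finally show "c_num n 0 = (\<Sum>s=0..n div 2. ((n - s) choose s) * a_num (n - s) 0)" .
next
  show "\<forall>k::nat. k > 0 \<longrightarrow>
           c_num n k = (\<Sum>s=1..(n - k) div 2.
              ((k + s - 1) choose k) * ((n - k - s) choose s) * a_num (n - k - s) 0)"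
  proof (intro allI impI)
    fix k :: nat assume k: "k > 0"
    have "c_num n k = (\<Sum>s=0..n. ((k+s-1) choose k) * ((n-k-s) choose s) * a_num (n-k-s) 0)"
      using c_num_TT[of n k] sumTT[where n=n and k=k and \<phi>="\<lambda>m. a_num m 0"] by simp
    also have "\<dots> = (\<Sum>s=1..(n - k) div 2. ((k + s - 1) choose k) * ((n - k - s) choose s) * a_num (n - k - s) 0)"
    proof (rule sum.mono_neutral_right)
      show "\<forall>i\<in>{0..n} - {1..(n - k) div 2}. ((k + i - 1) choose k) * ((n - k - i) choose i) * a_num (n - k - i) 0 = 0"
      proof
        fix i assume i: "i \<in> {0..n} - {1..(n - k) div 2}"
        show "((k + i - 1) choose k) * ((n - k - i) choose i) * a_num (n - k - i) 0 = 0"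
        proof (cases "i = 0")
          case True
          then show ?thesis using k by simp
        next
          case False
          then have "n - k - i < i" using i by auto
          then show ?thesis by simp
        qed
      qed
    qed auto
    finally show "c_num n k = (\<Sum>s=1..(n - k) div 2.
              ((k + s - 1) choose k) * ((n - k - s) choose s) * a_num (n - k - s) 0)" .
  qed
qed

end
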